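(* Let $p=(p_1,p_2,p_3,p_4)$ be an ordered quadruple of distinct points of $\partial\mathbf H^2_{\mathbb C}$ and let $(X_1,X_2,A)=\bigl(X(p_1,p_2,p_3,p_4),X(p_1,p_3,p_2,p_4),\mathbb A(p_1,p_2,p_3)\bigr)$. Then some triple $(p_i,p_j,p_k)$, $i<j<k$, lies on a chain if and only if $(X_1,X_2,A)$ belongs to at least one of the sets $\mathbb S_{123},\mathbb S_{124},\mathbb S_{134},\mathbb S_{234}$. Moreover, all four points lie on a common chain if and only if $(X_1,X_2,A)$ belongs to at least two of these sets.
   Context: $\mathbb C^{2,1}$ is $\mathbb C^3$ with Hermitian form $\langle Z,W\rangle=z_1\overline{w}_3+z_2\overline{w}_2+z_3\overline{w}_1$; $\partial\mathbf H^2_{\mathbb C}$ is the set of null lines in $\mathbb P\mathbb C^2$. A chain is the boundary of a complex geodesic (intersection of $\partial\mathbf H^2_{\mathbb C}$ with the projectivization of a 2-dimensional complex subspace of signature $(1,1)$). With null lifts $P_i$: $X(p_1,p_2,p_3,p_4)=\dfrac{\langle P_3,P_1\rangle\langle P_4,P_2\rangle}{\langle P_4,P_1\rangle\langle P_3,P_2\rangle}$, $\mathbb A(p_1,p_2,p_3)=\arg\bigl(-\langle P_1,P_2\rangle\langle P_2,P_3\rangle\langle P_3,P_1\rangle\bigr)$. The Cartan varieties in $\mathbb C^2\times\mathbb R$ are $\mathbb S_{123}=\{\mathrm{Re}(e^{iA})=0\}$, $\mathbb S_{124}=\{\mathrm{Re}(\overline{X}_1e^{iA})=0\}$, $\mathbb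 S_{134}=\{\mathrm{Re}(\overline{X}_2e^{-iA})=0\}$, $\mathbb S_{234}=\{\mathrm{Re}(X_1\overline{X}_2e^{-iA})=0\}$. *)

theory Defs
  imports "HOL-Analysis.Analysis"
begin

text \<open>Vectors of C^{2,1} are elements of complex^3; points of the boundary of complex
hyperbolic 2-space are represented by nonzero null lifts.\<close>

definition herm :: "complex^3 \<Rightarrow> complex^3 \<Rightarrow> complex" where
  "herm Z W = Z$1 * cnj (W$3) + Z$2 * cnj (W$2) + Z$3 * cnj (W$1)"

definition null_lift :: "complex^3 \<Rightarrow> bool" where
  "null_lift Z \<longleftrightarrow> Z \<noteq> 0 \<and> herm Z Z = 0"

definition same_point :: "complex^3 \<Rightarrow> complex^3 \<Rightarrow> bool" where
  "same_point Z W \<longleftrightarrow> (\<exists>c::complex. W = c *s Z)"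

text \<open>The projectivised 2-dim subspace span{U,W} has signature (1,1): it has an
orthogonal basis U, W with herm U U > 0 and herm W W < 0.\<close>
definition signature_11_basis :: "complex^3 \<Rightarrow> complex^3 \<Rightarrow> bool" where
  "signature_11_basis U W \<longleftrightarrow>
     Re (herm U U) > 0 \<and> Re (herm W W) < 0 \<and> herm U W = 0"

definition in_span2 :: "complex^3 \<Rightarrow> complex^3 \<Rightarrow> complex^3 \<Rightarrow> bool" where
  "in_span2 U W Z \<longleftrightarrow> (\<exists>a b::complex. Z = a *s U + b *s W)"

text \<open>A set of points lies on a chain: all lifts lie in one 2-dim complex subspace
of signature (1,1).\<close>
definition on_chain :: "(complex^3) list \<Rightarrow> bool" where
  "on_chain Ps \<longleftrightarrow> (\<exists>U W. signature_11_basis U W \<and> (\<forall>Z\<in>set Ps. in_span2 U W Z))"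

definition cross_ratio :: "complex^3 \<Rightarrow> complex^3 \<Rightarrow> complex^3 \<Rightarrow> complex^3 \<Rightarrow> complex" where
  "cross_ratio P1 P2 P3 P4 =
     (herm P3 P1 * herm P4 P2) / (herm P4 P1 * herm P3 P2)"

definition cartan_inv :: "complex^3 \<Rightarrow> complex^3 \<Rightarrow> complex^3 \<Rightarrow> real" where
  "cartan_inv P1 P2 P3 = Arg (- herm P1 P2 * herm P2 P3 * herm P3 P1)"

definition S123 :: "(complex \<times> complex \<times> real) set" where
  "S123 = {(X1, X2, A). Re (exp (\<i> * of_real A)) = 0}"

definition S124 :: "(complex \<times> complex \<times> real) set" where
  "S124 = {(X1, X2, A). Re (cnj X1 * exp (\<i> * of_real A)) = 0}"

definition S134 :: "(complex \<times> complex \<times> real) set" where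
  "S134 = {(X1, X2, A). Re (cnj X2 * exp (- \<i> * of_real A)) = 0}"

definition S234 :: "(complex \<times> complex \<times> real) set" where
  "S234 = {(X1, X2, A). Re (X1 * cnj X2 * exp (- \<i> * of_real A)) = 0}"

definition cartan_varieties :: "(complex \<times> complex \<times> real) set list" where
  "cartan_varieties = [S123, S124, S134, S234]"

definition num_cartan :: "complex \<times> complex \<times> real \<Rightarrow> nat" where
  "num_cartan x = length (filter (\<lambda>S. x \<in> S) cartan_varieties)"

end

theory Submission
  imports Defs
begin

definition det3 :: "complex^3 \<Rightarrow> complex^3 \<Rightarrow> complex^3 \<Rightarrow> complex" where
 "det3 P Q R = P$1*(Q$2*R$3 - Q$3*R$2) - P$2*(Q$1*R$3 - Q$3*R$1) + P$3*(Q$1*R$2 - Q$2*R$1)"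

lemma gram:
 "herm P P * herm Q Q * herm R R + herm P Q * herm Q R * herm R P + herm P R * herm Q P * herm R Q
  - herm P P * herm Q R * herm R Q - herm Q Q * herm P R * herm R P - herm R R * herm P Q * herm Q P
  = - (det3 P Q R * cnj (det3 P Q R))"
  unfolding herm_def det3_def
  apply (simp only: complex_cnj_mult complex_cnj_add complex_cnj_diff)
  apply (simp add: algebra_simps)
  done

lemma herm_cnj: "cnj (herm P Q) = herm Q P"
  unfolding herm_def by simp

lemma herm_add_left: "herm (P + Q) R = herm P R + herm Q R"
  unfolding herm_def by (simp add: algebra_simps)
lemma herm_add_right: "herm R (P + Q) = herm R P + herm R Q"
  unfolding herm_def by (simp add: algebra_simps)
lemma herm_diff_left: "herm (P - Q) R = herm P R - herm Q R"
  unfolding herm_def by (simp add: algebra_simps)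
lemma herm_diff_right: "herm R (P - Q) = herm R P - herm R Q"
  unfolding herm_def by (simp add: algebra_simps)
lemma herm_scale_left: "herm (c *s P) R = c * herm P R"
  unfolding herm_def by (simp add: algebra_simps)
lemma herm_scale_right: "herm R (c *s P) = cnj c * herm R P"
  unfolding herm_def by (simp add: algebra_simps)

lemma det3_swap12: "det3 Q P R = - det3 P Q R"
  unfolding det3_def by (simp add: algebra_simps)
lemma det3_swap23: "det3 P R Q = - det3 P Q R"
  unfolding det3_def by (simp add: algebra_simps)
lemma det3_cyc: "det3 Q R P = det3 P Q R"
  unfolding det3_def by (simp add: algebra_simps)
lemma det3_PPR: "det3 P P R = 0"
  unfolding det3_def by (simp add: algebra_simps)
lemma det3_PQP: "det3 P Q P = 0"
  unfolding det3_def by (simp add: algebra_simps)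
lemma det3_PQQ: "det3 P Q Q = 0"
  unfolding det3_def by (simp add: algebra_simps)

lemma cross_nz:
  assumes "P \<noteq> 0" "\<not> same_point P Q"
  shows "P$2*Q$3 - P$3*Q$2 \<noteq> 0 \<or> P$3*Q$1 - P$1*Q$3 \<noteq> 0 \<or> P$1*Q$2 - P$2*Q$1 \<noteq> 0"
proof (rule ccontr)
  assume "\<not> ?thesis"
  hence e1: "P$2*Q$3 = P$3*Q$2" and e2: "P$3*Q$1 = P$1*Q$3" and e3: "P$1*Q$2 = P$2*Q$1" by auto
  have "P$1 \<noteq> 0 \<or> P$2 \<noteq> 0 \<or> P$3 \<noteq> 0"
    using assms(1) by (auto simp: vec_eq_iff forall_3)
  moreover
  { assume h: "P$1 \<noteq> 0"
    have "Q = (Q$1/P$1) *s P" using h e1 e2 e3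
      by (auto simp: vec_eq_iff forall_3 field_simps)
    hence False using assms(2) unfolding same_point_def by blast }
  moreover
  { assume h: "P$2 \<noteq> 0"
    have "Q = (Q$2/P$2) *s P" using h e1 e2 e3
      by (auto simp: vec_eq_iff forall_3 field_simps)
    hence False using assms(2) unfolding same_point_def by blast }
  moreover
  { assume h: "P$3 \<noteq> 0"
    have "Q = (Q$3/P$3) *s P" using h e1 e2 e3
      by (auto simp: vec_eq_iff forall_3 field_simps)
    hence False using assms(2) unfolding same_point_def by blast }
  ultimately show False by blast
qed

lemma lin_comb_aux:
  fixes c n1 n2 :: complex and R P Q :: "complex^3"
  assumes "c \<noteq> 0" "R$1*c = n1*P$1 + n2*Q$1" "R$2*c = n1*P$2 + n2*Q$2" "R$3*c = n1*P$3 + n2*Q$3"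
  shows "R = (n1/c) *s P + (n2/c) *s Q"
proof -
  have "R$i = (n1/c)*P$i + (n2/c)*Q$i" if "R$i*c = n1*P$i + n2*Q$i" for i
    using that assms(1) by (simp add: field_simps)
  thus ?thesis using assms by (auto simp: vec_eq_iff forall_3)
qed

lemma span_of_det:
  assumes "P \<noteq> 0" "\<not> same_point P Q" "det3 P Q R = 0"
  shows "\<exists>a b. R = a *s P + b *s Q"
proof -
  have d: "R$1*(P$2*Q$3 - P$3*Q$2) + R$2*(P$3*Q$1 - P$1*Q$3) + R$3*(P$1*Q$2 - P$2*Q$1) = 0"
    using assms(3) unfolding det3_def by (simp add: algebra_simps)
  have "P$2*Q$3 - P$3*Q$2 \<noteq> 0 \<or> P$3*Q$1 - P$1*Q$3 \<noteq> 0 \<or> P$1*Q$2 - P$2*Q$1 \<noteq> 0"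
    using cross_nz assms by blast
  moreover
  { assume h: "P$1*Q$2 - P$2*Q$1 \<noteq> 0"
    have "R = ((R$1*Q$2 - R$2*Q$1)/(P$1*Q$2 - P$2*Q$1)) *s P + ((P$1*R$2 - P$2*R$1)/(P$1*Q$2 - P$2*Q$1)) *s Q"
      apply (rule lin_comb_aux[OF h])
      using d by (simp_all add: algebra_simps) (metis add_diff_cancel_right' diff_0 minus_diff_eq add.commute)?
    hence ?thesis by blast }
  moreover
  { assume h: "P$2*Q$3 - P$3*Q$2 \<noteq> 0"
    have "R = ((R$2*Q$3 - R$3*Q$2)/(P$2*Q$3 - P$3*Q$2)) *s P + ((P$2*R$3 - P$3*R$2)/(P$2*Q$3 - P$3*Q$2)) *s Q"
      apply (rule lin_comb_aux[OF h])
      using d by (simp_all add: algebra_simps)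
    hence ?thesis by blast }
  moreover
  { assume h: "P$3*Q$1 - P$1*Q$3 \<noteq> 0"
    have "R = ((R$3*Q$1 - R$1*Q$3)/(P$3*Q$1 - P$1*Q$3)) *s P + ((P$3*R$1 - P$1*R$3)/(P$3*Q$1 - P$1*Q$3)) *s Q"
      apply (rule lin_comb_aux[OF h])
      using d by (simp_all add: algebra_simps)
    hence ?thesis by blast }
  ultimately show ?thesis by blast
qed

lemma gram_null:
  assumes "null_lift P" "null_lift Q" "null_lift R"
  shows "herm P Q * herm Q R * herm R P + cnj (herm P Q * herm Q R * herm R P)
         = - (det3 P Q R * cnj (det3 P Q R))"
proof -
  have "cnj (herm P Q * herm Q R * herm R P) = herm P R * herm Q P * herm R Q"
    by (simp add: herm_cnj)
  thus ?thesis using gram[of P Q R] assms unfolding null_lift_def by simp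
qed

lemma re_aux:
  fixes z d :: complex
  assumes "z + cnj z = - (d * cnj d)"
  shows "2 * Re z = - (cmod d * cmod d)"
proof -
  have "Re (z + cnj z) = Re (- (d * cnj d))" using assms by simp
  also have "d * cnj d = complex_of_real ((cmod d)\<^sup>2)" by (rule complex_norm_square[symmetric])
  finally show ?thesis by (simp add: power2_eq_square)
qed

lemma Re_triple:
  assumes "null_lift P" "null_lift Q" "null_lift R"
  shows "Re (- (herm P Q * herm Q R * herm R P)) = 0 \<longleftrightarrow> det3 P Q R = 0"
proof -
  let ?z = "herm P Q * herm Q R * herm R P"
  have e: "Re (?z + cnj ?z) = Re (- (det3 P Q R * cnj (det3 P Q R)))"
    using gram_null[OF assms] by simp
  have "2 * Re ?z = - (cmod (det3 P Q R) * cmod (det3 P Q R))"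
    using re_aux gram_null[OF assms] by blast
  thus ?thesis by auto
qed

lemma det_axis:
  "det3 P Q (axis 1 1) = P$2*Q$3 - P$3*Q$2"
  "det3 P Q (axis 2 1) = P$3*Q$1 - P$1*Q$3"
  "det3 P Q (axis 3 1) = P$1*Q$2 - P$2*Q$1"
  unfolding det3_def by (simp_all add: axis_def algebra_simps)

lemma herm_nz:
  assumes "null_lift P" "null_lift Q" "\<not> same_point P Q"
  shows "herm P Q \<noteq> 0"
proof
  assume h: "herm P Q = 0"
  have h2: "herm Q P = 0" using h herm_cnj[of P Q] by simp
  have z: "det3 P Q R = 0" for R
  proof -
    have "det3 P Q R * cnj (det3 P Q R) = 0"
      using gram[of P Q R] h h2 assms unfolding null_lift_def by simp
    thus ?thesis by simp
  qed
  have "P \<noteq> 0" using assms unfolding null_lift_def by simp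
  from cross_nz[OF this assms(3)] show False
    using z[of "axis 1 1"] z[of "axis 2 1"] z[of "axis 3 1"] by (simp add: det_axis)
qed

lemma chain_from_span:
  assumes "null_lift P" "null_lift Q" "\<not> same_point P Q" "\<forall>Z\<in>set Zs. det3 P Q Z = 0"
  shows "on_chain Zs"
proof -
  define h where "h = herm P Q"
  have hnz: "h \<noteq> 0" unfolding h_def using herm_nz assms by blast
  have hqp: "herm Q P = cnj h" using herm_cnj h_def by metis
  have pp: "herm P P = 0" and qq: "herm Q Q = 0" using assms unfolding null_lift_def by auto
  define U where "U = P + h *s Q"
  define W where "W = P - h *s Q"
  have hc: "h * cnj h = complex_of_real (cmod h * cmod h)" by (simp add: complex_norm_square[symmetric] power2_eq_square)
  have "herm U U = 2 * (h * cnj h)"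
    unfolding U_def by (simp add: herm_add_left herm_add_right herm_scale_left herm_scale_right pp qq hqp h_def[symmetric] algebra_simps)
  hence uu: "Re (herm U U) > 0" using hnz hc by simp
  have "herm W W = - 2 * (h * cnj h)"
    unfolding W_def by (simp add: herm_diff_left herm_diff_right herm_scale_left herm_scale_right pp qq hqp h_def[symmetric] algebra_simps)
  hence ww: "Re (herm W W) < 0" using hnz hc by simp
  have uw: "herm U W = 0"
    unfolding U_def W_def by (simp add: herm_diff_right herm_add_left herm_scale_left herm_scale_right pp qq hqp h_def[symmetric] algebra_simps)
  have sp: "in_span2 U W Z" if zin: "Z \<in> set Zs" for Z
  proof -
    have "P \<noteq> 0" using assms unfolding null_lift_def by simp
    then obtain a b where z: "Z = a *s P + b *s Q" using span_of_det assms zin by blast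
    have "Z = (a/2 + b/(2*h)) *s U + (a/2 - b/(2*h)) *s W"
      unfolding z U_def W_def using hnz by (auto simp: vec_eq_iff forall_3 field_simps)
    thus ?thesis unfolding in_span2_def by blast
  qed
  show ?thesis unfolding on_chain_def signature_11_basis_def using uu ww uw sp by blast
qed

lemma det_of_chain:
  assumes "on_chain Zs" "P \<in> set Zs" "Q \<in> set Zs" "R \<in> set Zs"
  shows "det3 P Q R = 0"
proof -
  obtain U W where "\<forall>Z\<in>set Zs. in_span2 U W Z" using assms(1) unfolding on_chain_def by blast
  then obtain a1 b1 a2 b2 a3 b3 where "P = a1 *s U + b1 *s W" "Q = a2 *s U + b2 *s W" "R = a3 *s U + b3 *s W"
    using assms unfolding in_span2_def by meson
  thus ?thesis unfolding det3_def by (simp add: algebra_simps)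
qed

lemma triple_chain:
  assumes "null_lift P" "null_lift Q" "null_lift R" "\<not> same_point P Q"
  shows "on_chain [P, Q, R] \<longleftrightarrow> det3 P Q R = 0"
proof
  assume "on_chain [P, Q, R]" thus "det3 P Q R = 0" by (rule det_of_chain) auto
next
  assume "det3 P Q R = 0"
  thus "on_chain [P, Q, R]" using assms by (intro chain_from_span) (auto simp: det3_PQP det3_PQQ)
qed

lemma expA:
  assumes "w \<noteq> 0"
  shows "exp (\<i> * of_real (Arg w)) = w / of_real (cmod w)"
    and "exp (- \<i> * of_real (Arg w)) = cnj w / of_real (cmod w)"
proof -
  have c: "cis (Arg w) = w / of_real (cmod w)" using cis_Arg[OF assms] by (simp add: sgn_div_norm scaleR_conv_of_real divide_inverse mult.commute)
  show "exp (\<i> * of_real (Arg w)) = w / of_real (cmod w)" using c by (simp add: cis_conv_exp)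
  have "exp (- \<i> * of_real (Arg w)) = cis (- Arg w)" by (simp add: cis_conv_exp)
  also have "\<dots> = cnj (cis (Arg w))" by (simp add: cis_cnj)
  finally show "exp (- \<i> * of_real (Arg w)) = cnj w / of_real (cmod w)" using c by simp
qed

lemma re_div:
  assumes "r > 0"
  shows "Re (y * (w / of_real r)) = 0 \<longleftrightarrow> Re (y * w) = 0"
proof -
  have "y * (w / of_real r) = (y * w) / of_real r" by simp
  thus ?thesis using assms by (simp add: Re_divide_of_real)
qed

lemma re_ratio:
  fixes z u v :: complex
  assumes "u \<noteq> 0" "v \<noteq> 0"
  shows "Re (z * (u * cnj u) / (v * cnj v)) = 0 \<longleftrightarrow> Re z = 0"
proof -
  have "z * (u * cnj u) / (v * cnj v) = z * of_real ((cmod u)\<^sup>2) / of_real ((cmod v)\<^sup>2)"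
    by (simp only: complex_norm_square)
  also have "\<dots> = z * of_real ((cmod u)\<^sup>2 / (cmod v)\<^sup>2)" by simp
  finally have "z * (u * cnj u) / (v * cnj v) = z * of_real ((cmod u)\<^sup>2 / (cmod v)\<^sup>2)" .
  moreover have "(cmod u)\<^sup>2 / (cmod v)\<^sup>2 > 0" using assms by simp
  ultimately show ?thesis using assms by simp
qed

lemma four_chain:
  assumes "null_lift P" "null_lift Q" "\<not> same_point P Q" "det3 P Q R = 0" "det3 P Q S = 0"
    "set Zs \<subseteq> {P, Q, R, S}"
  shows "on_chain Zs"
  apply (rule chain_from_span[OF assms(1-3)])
  using assms(4-6) by (auto simp: det3_PQP det3_PQQ)

theorem proposition3p3:
  fixes P1 P2 P3 P4 :: "complex^3"
  assumes "null_lift P1" "null_lift P2" "null_lift P3" "null_lift P4"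
    and "\<not> same_point P1 P2" "\<not> same_point P1 P3" "\<not> same_point P1 P4"
    and "\<not> same_point P2 P3" "\<not> same_point P2 P4" "\<not> same_point P3 P4"
  defines "x \<equiv> (cross_ratio P1 P2 P3 P4, cross_ratio P1 P3 P2 P4, cartan_inv P1 P2 P3)"
  shows "((on_chain [P1, P2, P3] \<or> on_chain [P1, P2, P4] \<or> on_chain [P1, P3, P4]
            \<or> on_chain [P2, P3, P4]) \<longleftrightarrow> num_cartan x \<ge> 1)
         \<and> (on_chain [P1, P2, P3, P4] \<longleftrightarrow> num_cartan x \<ge> 2)"
proof -
  note n = assms(1-4)
  define a where "a = herm P1 P2"
  define b where "b = herm P1 P3"
  define c where "c = herm P1 P4"
  define d where "d = herm P2 P3"
  define e where "e = herm P2 P4"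
  define f where "f = herm P3 P4"
  have anz: "a \<noteq> 0" unfolding a_def using herm_nz assms by blast
  have bnz: "b \<noteq> 0" unfolding b_def using herm_nz assms by blast
  have cnz: "c \<noteq> 0" unfolding c_def using herm_nz assms by blast
  have dnz: "d \<noteq> 0" unfolding d_def using herm_nz assms by blast
  have enz: "e \<noteq> 0" unfolding e_def using herm_nz assms by blast
  have fnz: "f \<noteq> 0" unfolding f_def using herm_nz assms by blast
  have r: "herm P2 P1 = cnj a" "herm P3 P1 = cnj b" "herm P4 P1 = cnj c"
     "herm P3 P2 = cnj d" "herm P4 P2 = cnj e" "herm P4 P3 = cnj f"
    unfolding a_def b_def c_def d_def e_def f_def by (simp_all add: herm_cnj)
  define w where "w = - (a * d * cnj b)"
  have wnz: "w \<noteq> 0" using anz bnz dnz unfolding w_def by simp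
  have wpos: "cmod w > 0" using wnz by simp
  have X1: "cross_ratio P1 P2 P3 P4 = cnj b * cnj e / (cnj c * cnj d)"
    unfolding cross_ratio_def using r by simp
  have X2: "cross_ratio P1 P3 P2 P4 = cnj a * cnj f / (cnj c * d)"
    unfolding cross_ratio_def using r d_def by simp
  have A: "cartan_inv P1 P2 P3 = Arg w"
    unfolding cartan_inv_def w_def using r a_def d_def by simp
  have D123: "det3 P1 P2 P3 = 0 \<longleftrightarrow> Re w = 0"
    using Re_triple[OF n(1,2,3)] r a_def d_def w_def by simp
  have D124: "det3 P1 P2 P4 = 0 \<longleftrightarrow> Re (- (a * e * cnj c)) = 0"
    using Re_triple[OF n(1,2,4)] r a_def e_def by simp
  have D134: "det3 P1 P3 P4 = 0 \<longleftrightarrow> Re (- (b * f * cnj c)) = 0"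
    using Re_triple[OF n(1,3,4)] r b_def f_def by simp
  have D234: "det3 P2 P3 P4 = 0 \<longleftrightarrow> Re (- (d * f * cnj e)) = 0"
    using Re_triple[OF n(2,3,4)] r d_def f_def by simp
  have S1: "x \<in> S123 \<longleftrightarrow> det3 P1 P2 P3 = 0"
  proof -
    have "x \<in> S123 \<longleftrightarrow> Re (1 * (w / of_real (cmod w))) = 0"
      unfolding S123_def x_def A by (simp only: expA(1)[OF wnz] mem_Collect_eq prod.case mult_1_left)
    also have "\<dots> \<longleftrightarrow> Re (1 * w) = 0" by (rule re_div[OF wpos])
    finally show ?thesis using D123 by simp
  qed
  have S2: "x \<in> S124 \<longleftrightarrow> det3 P1 P2 P4 = 0"
  proof -
    have "x \<in> S124 \<longleftrightarrow> Re (cnj (cnj b * cnj e / (cnj c * cnj d)) * (w / of_real (cmod w))) = 0"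
      unfolding S124_def x_def A X1 by (simp only: expA(1)[OF wnz] mem_Collect_eq prod.case mult_1_left)
    also have "\<dots> \<longleftrightarrow> Re (cnj (cnj b * cnj e / (cnj c * cnj d)) * w) = 0" by (rule re_div[OF wpos])
    also have "cnj (cnj b * cnj e / (cnj c * cnj d)) * w = (- (a * e * cnj c)) * (b * cnj b) / (c * cnj c)"
      unfolding w_def using cnz dnz by (simp add: field_simps)
    also have "Re \<dots> = 0 \<longleftrightarrow> Re (- (a * e * cnj c)) = 0" by (rule re_ratio[OF bnz cnz])
    finally show ?thesis using D124 by simp
  qed
  have S3: "x \<in> S134 \<longleftrightarrow> det3 P1 P3 P4 = 0"
  proof -
    have "x \<in> S134 \<longleftrightarrow> Re (cnj (cnj a * cnj f / (cnj c * d)) * (cnj w / of_real (cmod w))) = 0"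
      unfolding S134_def x_def A X2 by (simp only: expA(2)[OF wnz] mem_Collect_eq prod.case)
    also have "\<dots> \<longleftrightarrow> Re (cnj (cnj a * cnj f / (cnj c * d)) * cnj w) = 0" by (rule re_div[OF wpos])
    also have "cnj (cnj a * cnj f / (cnj c * d)) * cnj w = (- (b * f * cnj c)) * (a * cnj a) / (c * cnj c)"
      unfolding w_def using cnz dnz by (simp add: field_simps)
    also have "Re \<dots> = 0 \<longleftrightarrow> Re (- (b * f * cnj c)) = 0" by (rule re_ratio[OF anz cnz])
    finally show ?thesis using D134 by simp
  qed
  have S4: "x \<in> S234 \<longleftrightarrow> det3 P2 P3 P4 = 0"
  proof -
    have "x \<in> S234 \<longleftrightarrow> Re ((cnj b * cnj e / (cnj c * cnj d)) * cnj (cnj a * cnj f / (cnj c * d)) * (cnj w / of_real (cmod w))) = 0"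
      unfolding S234_def x_def A X1 X2 by (simp only: expA(2)[OF wnz] mem_Collect_eq prod.case)
    also have "\<dots> \<longleftrightarrow> Re ((cnj b * cnj e / (cnj c * cnj d)) * cnj (cnj a * cnj f / (cnj c * d)) * cnj w) = 0" by (rule re_div[OF wpos])
    also have "(cnj b * cnj e / (cnj c * cnj d)) * cnj (cnj a * cnj f / (cnj c * d)) * cnj w
         = (- (d * f * cnj e)) * ((a * b) * cnj (a * b)) / ((c * d) * cnj (c * d))"
      unfolding w_def using cnz dnz by (simp add: field_simps)
    also have "Re \<dots> = 0 \<longleftrightarrow> Re (- (d * f * cnj e)) = 0" by (rule re_ratio) (use anz bnz cnz dnz in simp_all)
    finally show ?thesis using D234 by simp
  qed
  have T1: "on_chain [P1, P2, P3] \<longleftrightarrow> det3 P1 P2 P3 = 0" using triple_chain assms by blast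
  have T2: "on_chain [P1, P2, P4] \<longleftrightarrow> det3 P1 P2 P4 = 0" using triple_chain assms by blast
  have T3: "on_chain [P1, P3, P4] \<longleftrightarrow> det3 P1 P3 P4 = 0" using triple_chain assms by blast
  have T4: "on_chain [P2, P3, P4] \<longleftrightarrow> det3 P2 P3 P4 = 0" using triple_chain assms by blast
  have NC: "num_cartan x = (if x \<in> S123 then 1 else 0) + (if x \<in> S124 then 1 else 0)
      + (if x \<in> S134 then 1 else 0) + (if x \<in> S234 then 1 else 0)"
    unfolding num_cartan_def cartan_varieties_def by simp
  let ?d1 = "det3 P1 P2 P3 = 0" and ?d2 = "det3 P1 P2 P4 = 0"
    and ?d3 = "det3 P1 P3 P4 = 0" and ?d4 = "det3 P2 P3 P4 = 0"
  have C4: "on_chain [P1, P2, P3, P4] \<longleftrightarrow>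
     ((?d1 \<and> ?d2) \<or> (?d1 \<and> ?d3) \<or> (?d1 \<and> ?d4) \<or> (?d2 \<and> ?d3) \<or> (?d2 \<and> ?d4) \<or> (?d3 \<and> ?d4))"
  proof
    assume h: "on_chain [P1, P2, P3, P4]"
    have "?d1" "?d2" by (rule det_of_chain[OF h]; simp)+
    thus "(?d1 \<and> ?d2) \<or> (?d1 \<and> ?d3) \<or> (?d1 \<and> ?d4) \<or> (?d2 \<and> ?d3) \<or> (?d2 \<and> ?d4) \<or> (?d3 \<and> ?d4)" by blast
  next
    assume h: "(?d1 \<and> ?d2) \<or> (?d1 \<and> ?d3) \<or> (?d1 \<and> ?d4) \<or> (?d2 \<and> ?d3) \<or> (?d2 \<and> ?d4) \<or> (?d3 \<and> ?d4)"
    moreover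
    { assume "?d1" "?d2"
      hence "on_chain [P1, P2, P3, P4]" by (intro four_chain[of P1 P2 P3 P4]) (use assms in auto) }
    moreover
    { assume "?d1" "?d3"
      hence "det3 P1 P3 P2 = 0" "det3 P1 P3 P4 = 0" by (metis det3_cyc det3_swap23 neg_equal_0_iff_equal)+
      hence "on_chain [P1, P2, P3, P4]" by (intro four_chain[of P1 P3 P2 P4]) (use assms in auto) }
    moreover
    { assume "?d1" "?d4"
      hence "det3 P2 P3 P1 = 0" "det3 P2 P3 P4 = 0" by (metis det3_cyc det3_swap23 neg_equal_0_iff_equal)+
      hence "on_chain [P1, P2, P3, P4]" by (intro four_chain[of P2 P3 P1 P4]) (use assms in auto) }
    moreover
    { assume "?d2" "?d3"
      hence "det3 P1 P4 P2 = 0" "det3 P1 P4 P3 = 0" by (metis det3_cyc det3_swap23 neg_equal_0_iff_equal)+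
      hence "on_chain [P1, P2, P3, P4]" by (intro four_chain[of P1 P4 P2 P3]) (use assms in auto) }
    moreover
    { assume "?d2" "?d4"
      hence "det3 P2 P4 P1 = 0" "det3 P2 P4 P3 = 0" by (metis det3_cyc det3_swap23 neg_equal_0_iff_equal)+
      hence "on_chain [P1, P2, P3, P4]" by (intro four_chain[of P2 P4 P1 P3]) (use assms in auto) }
    moreover
    { assume "?d3" "?d4"
      hence "det3 P3 P4 P1 = 0" "det3 P3 P4 P2 = 0" by (metis det3_cyc det3_swap23 neg_equal_0_iff_equal)+
      hence "on_chain [P1, P2, P3, P4]" by (intro four_chain[of P3 P4 P1 P2]) (use assms in auto) }
    ultimately show "on_chain [P1, P2, P3, P4]" by blast
  qed
  show ?thesis unfolding NC C4 T1 T2 T3 T4 S1 S2 S3 S4 by auto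
qed

end
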